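(* Let $r \ge 3$ and $n \ge \frac{1}{3} r^4$. Let $\mathcal{H}$ be an intersecting $r$-uniform $n$-vertex hypergraph with $\delta_{r-1}^+(\mathcal{H}) \ge 2$ having the maximum number of hyperedges among all intersecting $r$-uniform $n$-vertex hypergraphs with minimum positive co-degree at least $2$. Then $\mathcal{H}$ is a $2$-kernel system.
   Context: A hypergraph is intersecting if every two of its hyperedges share at least one vertex. For a non-empty $r$-uniform hypergraph $\mathcal{H}$, the minimum positive co-degree $\delta_{r-1}^+(\mathcal{H})$ is the largest integer $k$ such that every $(r-1)$-set of vertices that is contained in at least one hyperedge of $\mathcal{H}$ is contained in at least $k$ distinct hyperedges of $\mathcal{H}$; for the empty hypergraph it is $0$. Given integers $r \ge k \ge 1$, an $r$-uniform $k$-kernel system on vertex set $V$ is a hypergraph whose hyperedge set is $\{E \in \binom{V}{r} : |E \cap X| \ge k\}$ for some set $X \subseteq V$ with $|X| = 2k-1$. *)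

theory Defs
  imports Main
begin

definition uniform_hg :: "nat \<Rightarrow> 'a set \<Rightarrow> 'a set set \<Rightarrow> bool" where
  "uniform_hg r V H \<longleftrightarrow> (\<forall>E\<in>H. E \<subseteq> V \<and> card E = r)"

definition intersecting :: "'a set set \<Rightarrow> bool" where
  "intersecting H \<longleftrightarrow> (\<forall>E\<in>H. \<forall>F\<in>H. E \<inter> F \<noteq> {})"

definition codeg :: "'a set set \<Rightarrow> 'a set \<Rightarrow> nat" where
  "codeg H S = card {E\<in>H. S \<subseteq> E}"

definition min_pos_codeg :: "nat \<Rightarrow> 'a set set \<Rightarrow> nat" where
  "min_pos_codeg r H =
     (if H = {} then 0
      else GREATEST k. \<forall>S. card S = r - 1 \<and> (\<exists>E\<in>H. S \<subseteq> E) \<longrightarrow> k \<le> codeg H S)"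

definition kernel_system :: "nat \<Rightarrow> nat \<Rightarrow> 'a set \<Rightarrow> 'a set set \<Rightarrow> bool" where
  "kernel_system r k V H \<longleftrightarrow>
     (\<exists>X. X \<subseteq> V \<and> card X = 2 * k - 1 \<and>
          H = {E. E \<subseteq> V \<and> card E = r \<and> card (E \<inter> X) \<ge> k})"

end

theory Submission
  imports Defs
begin
lemma binom_rel: "Suc k * (N choose Suc k) = (N - k) * (N choose k)"
  using times_binomial_minus1_eq[of "Suc k" N] binomial_absorb_comp[of N k] by simp

lemma arith_q:
  fixes r n :: nat assumes "r \<ge> 3" "r^4 \<le> 3*n"
  shows "(r-2)*r^3 < 3*(n-r) + (r-2)" and "(r-2)*(r-1)^2 < n - r" and "r \<le> n"
proof -
  define x where "x = int r"
  define y where "y = int n"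
  define a2 where "a2 = x*x"
  define a3 where "a3 = a2*x"
  define a4 where "a4 = a3*x"
  have h: "x ^ 4 \<le> 3 * y" unfolding x_def y_def using assms(2) by (simp flip: of_nat_power)
  have x3: "x \<ge> 3" using assms(1) x_def by simp
  have x2: "a2 \<ge> 3*x" using mult_right_mono[OF x3, of x] x3 a2_def by simp
  have c: "a3 \<ge> 3*a2" using mult_right_mono[OF x3, of "a2"] x3 a3_def a2_def by (simp add: mult.commute)
  have c4: "a4 \<ge> 3*a3" using mult_right_mono[OF x3, of "a3"] x3 a2_def a3_def a4_def by (simp add: mult.commute)
  have "x^4 = a4" unfolding a4_def a3_def a2_def by (simp add: power_numeral_reduce)
  hence h': "a4 \<le> 3*y" using h by simp
  have e1: "(x - 2)*a3 = a4 - 2*a3" unfolding a4_def by (simp add: algebra_simps)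
  have "(x - 2)*a3 < 3*(y - x) + (x - 2)" unfolding e1 using h' c x2 x3 by presburger
  moreover have "y \<ge> x" using h' c4 c x2 x3 by presburger
  ultimately have A: "(x - 2)*a3 < 3*(y - x) + (x - 2)" "y \<ge> x" by auto
  show rn: "r \<le> n" using \<open>y \<ge> x\<close> unfolding x_def y_def by simp
  have i1: "int ((r-2)*r^3) = (x-2)*a3" using assms(1) unfolding x_def a3_def a2_def
    by (simp add: of_nat_diff power3_eq_cube)
  have i2: "int (3*(n-r)+(r-2)) = 3*(y-x)+(x-2)" using assms(1) rn unfolding x_def y_def
    by (simp add: of_nat_diff)
  show "(r-2)*r^3 < 3*(n-r) + (r-2)" using A(1) i1 i2 by linarith
  have e2: "(x - 2)*((x-1)*(x-1)) = a3 - 4*a2 + 5*x - 2" unfolding a3_def a2_def by (simp add: algebra_simps)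
  have "(x - 2)*((x-1)*(x-1)) < y - x" unfolding e2 using h' c c4 x2 x3 by presburger
  moreover have i3: "int ((r-2)*(r-1)^2) = (x - 2)*((x-1)*(x-1))" using assms(1) unfolding x_def
    by (simp add: of_nat_diff power2_eq_square)
  moreover have i4: "int (n - r) = y - x" using rn unfolding x_def y_def by simp
  ultimately show "(r-2)*(r-1)^2 < n - r" by linarith
qed

lemma binom_ineqs:
  fixes r n :: nat assumes "r \<ge> 3" "r^4 \<le> 3*n"
  shows "r^3 * ((n-3) choose (r-3)) < ((n-2) choose (r-2)) + 2*((n-3) choose (r-2))"
    and "(r-1)^2 * ((n-3) choose (r-3)) < (n-3) choose (r-2)"
proof -
  note q = arith_q[OF assms]
  define k where "k = r - 3"
  define N where "N = n - 3"
  have r2: "r - 2 = Suc k" and n2: "n - 2 = Suc N" and nr: "N - k = n - r"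
    using assms(1) q(3) unfolding k_def N_def by auto
  define c0 where "c0 = N choose k"
  define c1 where "c1 = N choose Suc k"
  have c0p: "c0 > 0" unfolding c0_def using q(3) unfolding k_def N_def by simp
  have rel: "Suc k * c1 = (n - r) * c0" unfolding c0_def c1_def using binom_rel[of k N] nr by simp
  have pas: "(n-2) choose (r-2) = c0 + c1" unfolding n2 r2 c0_def c1_def by simp
  have "(r-2)*r^3 * c0 < (3*(n-r) + (r-2)) * c0" using q(1) c0p by simp
  also have "\<dots> = Suc k * (3*c1 + c0)" using rel r2 by (simp add: algebra_simps)
  finally have "Suc k * (r^3 * c0) < Suc k * (3*c1 + c0)" using r2 by (simp add: algebra_simps)
  hence "r^3 * c0 < 3*c1 + c0" by (meson mult_less_cancel1)
  then show "r^3 * ((n-3) choose (r-3)) < ((n-2) choose (r-2)) + 2*((n-3) choose (r-2))"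
    unfolding pas using r2 k_def N_def c0_def c1_def by (simp add: numeral_3_eq_3)
  have "(r-2)*(r-1)^2 * c0 < (n-r) * c0" using q(2) c0p by simp
  hence "Suc k * ((r-1)^2 * c0) < Suc k * c1" using rel r2 by (simp add: algebra_simps)
  hence "(r-1)^2 * c0 < c1" by (meson mult_less_cancel1)
  then have "(r-1)^2 * ((n-3) choose (r-3)) < (n-3) choose (Suc (r-3))"
    unfolding c0_def c1_def k_def N_def .
  moreover have "Suc (r-3) = r - 2" using assms(1) by simp
  ultimately show "(r-1)^2 * ((n-3) choose (r-3)) < (n-3) choose (r-2)" by simp
qed

lemma card_supsets:
  assumes "finite W" "T \<subseteq> W" "card T \<le> r"
  shows "card {E. E \<subseteq> W \<and> card E = r \<and> T \<subseteq> E} = (card W - card T) choose (r - card T)"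
proof -
  have fT: "finite T" using assms(1,2) finite_subset by blast
  have "bij_betw (\<lambda>E. E - T) {E. E \<subseteq> W \<and> card E = r \<and> T \<subseteq> E} {D. D \<subseteq> W - T \<and> card D = r - card T}"
  proof (rule bij_betw_byWitness[where f'="\<lambda>D. D \<union> T"])
    show "(\<lambda>E. E - T) ` {E. E \<subseteq> W \<and> card E = r \<and> T \<subseteq> E} \<subseteq> {D. D \<subseteq> W - T \<and> card D = r - card T}"
      using fT by (auto simp: card_Diff_subset)
    show "(\<lambda>D. D \<union> T) ` {D. D \<subseteq> W - T \<and> card D = r - card T} \<subseteq> {E. E \<subseteq> W \<and> card E = r \<and> T \<subseteq> E}"
    proof
      fix E assume "E \<in> (\<lambda>D. D \<union> T) ` {D. D \<subseteq> W - T \<and> card D = r - card T}"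
      then obtain D where D: "D \<subseteq> W - T" "card D = r - card T" and ED: "E = D \<union> T" by blast
      have "finite D" using D assms(1) finite_subset by blast
      hence "card (D \<union> T) = card D + card T" using D fT by (intro card_Un_disjoint) auto
      thus "E \<in> {E. E \<subseteq> W \<and> card E = r \<and> T \<subseteq> E}" using D ED assms by auto
    qed
    show "\<forall>x \<in> {E. E \<subseteq> W \<and> card E = r \<and> T \<subseteq> E}. x - T \<union> T = x" by auto
    show "\<forall>y \<in> {D. D \<subseteq> W - T \<and> card D = r - card T}. y \<union> T - T = y" by auto
  qed
  hence "card {E. E \<subseteq> W \<and> card E = r \<and> T \<subseteq> E} = card {D. D \<subseteq> W - T \<and> card D = r - card T}"
    by (rule bij_betw_same_card)
  also have "\<dots> = card (W - T) choose (r - card T)" using assms(1) by (simp add: n_subsets)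
  also have "card (W - T) = card W - card T" using fT assms(2) by (simp add: card_Diff_subset)
  finally show ?thesis .
qed

definition kern :: "nat \<Rightarrow> 'a set \<Rightarrow> 'a set \<Rightarrow> 'a set set" where
  "kern r V X = {E. E \<subseteq> V \<and> card E = r \<and> card (E \<inter> X) \<ge> 2}"

lemma codeg_two:
  assumes "finite H" "E \<in> H" "F \<in> H" "E \<noteq> F" "S \<subseteq> E" "S \<subseteq> F"
  shows "2 \<le> codeg H S"
proof -
  have "{E,F} \<subseteq> {G\<in>H. S \<subseteq> G}" using assms by auto
  hence "card {E,F} \<le> codeg H S" unfolding codeg_def using assms(1) by (intro card_mono) auto
  thus ?thesis using assms(4) by simp
qed

lemma mpc_bound:
  assumes fin: "finite H" and E: "E \<in> H" and cE: "card E = r" and r: "r \<ge> 1"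
  shows "\<And>y. (\<forall>S. card S = r - 1 \<and> (\<exists>E\<in>H. S \<subseteq> E) \<longrightarrow> y \<le> codeg H S) \<Longrightarrow> y \<le> card H"
proof -
  have "E \<noteq> {}" using cE r by auto
  then obtain x where x: "x \<in> E" by blast
  have fE: "finite E" using cE r card.infinite by force
  have cS: "card (E - {x}) = r - 1" using fE x cE by simp
  fix y assume "\<forall>S. card S = r - 1 \<and> (\<exists>E\<in>H. S \<subseteq> E) \<longrightarrow> y \<le> codeg H S"
  hence "y \<le> codeg H (E - {x})" using cS E by blast
  also have "\<dots> \<le> card H" unfolding codeg_def using fin by (intro card_mono) auto
  finally show "y \<le> card H" .
qed

lemma mpc_ge2:
  assumes fin: "finite H" and ne: "H \<noteq> {}" and unif: "\<forall>E\<in>H. card E = r" and r: "r \<ge> 1"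
    and cd: "\<And>E S. E \<in> H \<Longrightarrow> S \<subseteq> E \<Longrightarrow> card S = r - 1 \<Longrightarrow> 2 \<le> codeg H S"
  shows "2 \<le> min_pos_codeg r H"
proof -
  let ?P = "\<lambda>k. \<forall>S. card S = r - 1 \<and> (\<exists>E\<in>H. S \<subseteq> E) \<longrightarrow> k \<le> codeg H S"
  obtain E where E: "E \<in> H" using ne by blast
  note bound = mpc_bound[OF fin E _ r] 
  have "?P 2" using cd by blast
  hence "2 \<le> Greatest ?P" using Greatest_le_nat[of ?P 2 "card H"] bound unif E by blast
  thus ?thesis using ne unfolding min_pos_codeg_def by simp
qed

lemma mpc_use:
  assumes fin: "finite H" and unif: "\<forall>E\<in>H. card E = r" and r: "r \<ge> 1" and m: "2 \<le> min_pos_codeg r H"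
  shows "H \<noteq> {}" and "\<And>E S. E \<in> H \<Longrightarrow> S \<subseteq> E \<Longrightarrow> card S = r - 1 \<Longrightarrow> 2 \<le> codeg H S"
proof -
  show ne: "H \<noteq> {}" using m unfolding min_pos_codeg_def by (auto split: if_splits)
  let ?P = "\<lambda>k. \<forall>S. card S = r - 1 \<and> (\<exists>E\<in>H. S \<subseteq> E) \<longrightarrow> k \<le> codeg H S"
  obtain E0 where E0: "E0 \<in> H" using ne by blast
  note bound = mpc_bound[OF fin E0 _ r]
  have G: "?P (Greatest ?P)" by (rule GreatestI_nat[of ?P 0 "card H"]) (use bound unif E0 in auto)
  have eq: "min_pos_codeg r H = Greatest ?P" using ne unfolding min_pos_codeg_def by simp
  show "\<And>E S. E \<in> H \<Longrightarrow> S \<subseteq> E \<Longrightarrow> card S = r - 1 \<Longrightarrow> 2 \<le> codeg H S"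
  proof -
    fix E S assume a: "E \<in> H" "S \<subseteq> E" "card S = r - 1"
    have "Greatest ?P \<le> codeg H S" using G a by blast
    moreover have "2 \<le> Greatest ?P" using m eq by linarith
    ultimately show "2 \<le> codeg H S" by linarith
  qed
qed

lemma kern_valid:
  assumes fV: "finite V" and XV: "X \<subseteq> V" and cX: "card X = 3" and r: "r \<ge> 3" and n: "card V \<ge> r + 1"
  shows "uniform_hg r V (kern r V X)" "intersecting (kern r V X)" "2 \<le> min_pos_codeg r (kern r V X)"
proof -
  let ?K = "kern r V X"
  show "uniform_hg r V ?K" unfolding uniform_hg_def kern_def by auto
  have fX: "finite X" using XV fV finite_subset by blast
  show "intersecting ?K" unfolding intersecting_def
  proof (intro ballI)
    fix E F assume E: "E \<in> ?K" and F: "F \<in> ?K"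
    show "E \<inter> F \<noteq> {}"
    proof
      assume d: "E \<inter> F = {}"
      have "card ((E \<inter> X) \<union> (F \<inter> X)) = card (E \<inter> X) + card (F \<inter> X)"
        using fX d by (intro card_Un_disjoint) auto
      moreover have "card ((E \<inter> X) \<union> (F \<inter> X)) \<le> card X" using fX by (intro card_mono) auto
      ultimately show False using E F cX unfolding kern_def by auto
    qed
  qed
  have fK: "finite ?K"
    by (rule finite_subset[of _ "Pow V"]) (use fV in \<open>auto simp: kern_def\<close>)
  have ne: "?K \<noteq> {}"
  proof -
    obtain Y where Y: "Y \<subseteq> X" "card Y = 2" "finite Y" using obtain_subset_with_card_n[of 2 X] cX by auto
    have "card (V - Y) = card V - 2" using Y XV by (simp add: card_Diff_subset)
    hence "r - 2 \<le> card (V - Y)" using n by simp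
    then obtain D where D: "D \<subseteq> V - Y" "card D = r - 2" "finite D"
      using obtain_subset_with_card_n[of "r-2" "V - Y"] by auto
    have "card (Y \<union> D) = card Y + card D" using Y D by (intro card_Un_disjoint) auto
    hence "card (Y \<union> D) = r" using Y D r by simp
    moreover have "card Y \<le> card ((Y \<union> D) \<inter> X)" using Y fX by (intro card_mono) auto
    ultimately have "Y \<union> D \<in> ?K" using Y D XV unfolding kern_def by auto
    thus ?thesis by blast
  qed
  show "2 \<le> min_pos_codeg r ?K"
  proof (rule mpc_ge2[OF fK ne])
    show "\<forall>E\<in>?K. card E = r" unfolding kern_def by auto
    show "r \<ge> 1" using r by simp
    fix E S assume E: "E \<in> ?K" and SE: "S \<subseteq> E" and cS: "card S = r - 1"
    have EV: "E \<subseteq> V" and cE: "card E = r" and EX: "2 \<le> card (E \<inter> X)" using E unfolding kern_def by auto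
    have fE: "finite E" using EV fV finite_subset by blast
    have fS: "finite S" using SE fE finite_subset by blast
    have SV: "S \<subseteq> V" using SE EV by auto
    have "card (E - S) = 1" using SE fS cE cS r by (simp add: card_Diff_subset)
    then obtain v where v: "E - S = {v}" by (auto simp: card_1_singleton_iff)
    have "E \<inter> X \<subseteq> insert v (S \<inter> X)" using v by auto
    hence "card (E \<inter> X) \<le> card (insert v (S \<inter> X))" using fX by (intro card_mono) auto
    also have "\<dots> \<le> Suc (card (S \<inter> X))" using fX by (simp add: card_insert_if)
    finally have S1: "1 \<le> card (S \<inter> X)" using EX by simp
    obtain u w where uw: "u \<noteq> w" "u \<in> V - S" "w \<in> V - S"
      "2 \<le> card (insert u S \<inter> X)" "2 \<le> card (insert w S \<inter> X)"
    proof (cases "2 \<le> card (S \<inter> X)")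
      case True
      have "card (V - S) = card V - (r - 1)" using SV fS cS by (simp add: card_Diff_subset)
      hence "2 \<le> card (V - S)" using n r by simp
      then obtain T where T: "T \<subseteq> V - S" "card T = 2" using obtain_subset_with_card_n[of 2 "V - S"] by auto
      then obtain u w where uw: "T = {u,w}" "u \<noteq> w" by (auto simp: card_2_iff)
      have "card (S \<inter> X) \<le> card (insert u S \<inter> X)" "card (S \<inter> X) \<le> card (insert w S \<inter> X)"
        using fX by (intro card_mono; auto)+
      thus ?thesis using that[of u w] uw T True by auto
    next
      case False
      hence c1: "card (S \<inter> X) = 1" using S1 by simp
      have "card (X - S) = card X - card (X \<inter> S)" using fX by (simp add: card_Diff_subset_Int)
      hence "card (X - S) = 2" using c1 cX by (simp add: Int_commute)
      then obtain u w where uw: "X - S = {u,w}" "u \<noteq> w" by (auto simp: card_2_iff)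
      have "insert u S \<inter> X = insert u (S \<inter> X)" "insert w S \<inter> X = insert w (S \<inter> X)" using uw by auto
      moreover have "u \<notin> S \<inter> X" "w \<notin> S \<inter> X" using uw by auto
      ultimately have "card (insert u S \<inter> X) = 2" "card (insert w S \<inter> X) = 2"
        using c1 fX by simp_all
      thus ?thesis using that[of u w] uw XV by auto
    qed
    have "card (insert u S) = r" "card (insert w S) = r" using uw fS cS r by auto
    hence "insert u S \<in> ?K" "insert w S \<in> ?K" using uw SV unfolding kern_def by auto
    moreover have "insert u S \<noteq> insert w S" using uw by auto
    ultimately show "2 \<le> codeg ?K S" using codeg_two[OF fK] by blast
  qed
qed

lemma kern_card:
  assumes fV: "finite V" and XV: "X \<subseteq> V" and cX: "card X = 3" and r: "r \<ge> 3"
  shows "((card V - 2) choose (r-2)) + 2*((card V - 3) choose (r-2)) \<le> card (kern r V X)"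
proof -
  from cX obtain a b c where X: "X = {a,b,c}" "a\<noteq>b" "b\<noteq>c" "a\<noteq>c" unfolding card_3_iff by blast
  have fX: "finite X" using X by simp
  define A where "A = {E. E \<subseteq> V \<and> card E = r \<and> {a,b} \<subseteq> E}"
  define B where "B = {E. E \<subseteq> V - {b} \<and> card E = r \<and> {a,c} \<subseteq> E}"
  define C where "C = {E. E \<subseteq> V - {a} \<and> card E = r \<and> {b,c} \<subseteq> E}"
  have cV1: "card (V - {a}) = card V - 1" "card (V - {b}) = card V - 1" using X XV fV by auto
  have cA: "card A = (card V - 2) choose (r-2)"
    unfolding A_def using card_supsets[of V "{a,b}" r] X XV fV r by (simp add: numeral_2_eq_2)
  have cB: "card B = (card V - 3) choose (r-2)"
    unfolding B_def using card_supsets[of "V - {b}" "{a,c}" r] X XV fV r cV1 by (simp add: diff_diff_left numeral_2_eq_2 numeral_3_eq_3)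
  have cC: "card C = (card V - 3) choose (r-2)"
    unfolding C_def using card_supsets[of "V - {a}" "{b,c}" r] X XV fV r cV1 by (simp add: diff_diff_left numeral_2_eq_2 numeral_3_eq_3)
  have fin: "finite A" "finite B" "finite C"
    unfolding A_def B_def C_def by (rule finite_subset[of _ "Pow V"]; use fV in auto)+
  have "card (A \<union> B \<union> C) = card A + card B + card C"
  proof -
    have "A \<inter> B = {}" "(A \<union> B) \<inter> C = {}" unfolding A_def B_def C_def by auto
    have "card (A \<union> B) = card A + card B" using fin \<open>A \<inter> B = {}\<close> by (rule_tac card_Un_disjoint) auto
    moreover have "card (A \<union> B \<union> C) = card (A \<union> B) + card C"
      using fin \<open>(A \<union> B) \<inter> C = {}\<close> by (rule_tac card_Un_disjoint) auto
    ultimately show ?thesis by simp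
  qed
  moreover have "A \<union> B \<union> C \<subseteq> kern r V X"
  proof
    fix E assume E: "E \<in> A \<union> B \<union> C"
    have "{a,b} \<subseteq> E \<or> {a,c} \<subseteq> E \<or> {b,c} \<subseteq> E" using E unfolding A_def B_def C_def by blast
    then obtain p q where pq: "p \<noteq> q" "{p,q} \<subseteq> E \<inter> X"
      using X by blast
    have "card {p,q} \<le> card (E \<inter> X)" using pq fX by (intro card_mono) auto
    moreover have "card {p,q} = 2" using pq by simp
    moreover have "E \<subseteq> V" "card E = r" using E unfolding A_def B_def C_def by auto
    ultimately show "E \<in> kern r V X" unfolding kern_def by simp
  qed
  hence "card (A \<union> B \<union> C) \<le> card (kern r V X)"
    by (intro card_mono) (rule finite_subset[of _ "Pow V"], use fV in \<open>auto simp: kern_def\<close>)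
  ultimately show ?thesis using cA cB cC by linarith
qed

lemma two_elem_other:
  assumes "finite A" "2 \<le> card A" "x \<in> A" shows "\<exists>y\<in>A. y \<noteq> x"
proof (rule ccontr)
  assume "\<not> ?thesis"
  hence "A \<subseteq> {x}" by blast
  hence "card A \<le> card {x}" by (intro card_mono) auto
  thus False using assms(2) by simp
qed

theorem proposition6:
  fixes r n :: nat and V :: "'a set" and H :: "'a set set"
  assumes "r \<ge> 3"
    and "3 * n \<ge> r ^ 4"
    and "finite V" and "card V = n"
    and "uniform_hg r V H" and "intersecting H" and "min_pos_codeg r H \<ge> 2"
    and "\<forall>H'. uniform_hg r V H' \<and> intersecting H' \<and> min_pos_codeg r H' \<ge> 2
              \<longrightarrow> card H' \<le> card H"
  shows "kernel_system r 2 V H"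
proof -
  note q = arith_q[OF assms(1) assms(2)]
  note bi = binom_ineqs[OF assms(1) assms(2)]
  have r: "r \<ge> 3" by fact
  have fV: "finite V" by fact
  have nr1: "card V \<ge> r + 1" using q(2) assms(4) by linarith
  have n3: "card V \<ge> 3" using nr1 r by linarith
  have EV: "\<And>E. E \<in> H \<Longrightarrow> E \<subseteq> V" and cE: "\<And>E. E \<in> H \<Longrightarrow> card E = r"
    using assms(5) unfolding uniform_hg_def by auto
  have fEs: "\<And>E. E \<in> H \<Longrightarrow> finite E" using EV fV finite_subset by blast
  have fH: "finite H" by (rule finite_subset[of _ "Pow V"]) (use EV fV in auto)
  have int: "\<And>E F. E \<in> H \<Longrightarrow> F \<in> H \<Longrightarrow> E \<inter> F \<noteq> {}"
    using assms(6) unfolding intersecting_def by auto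
  have unifc: "\<forall>E\<in>H. card E = r" using cE by auto
  note mu = mpc_use[OF fH unifc _ assms(7)]
  have Hne: "H \<noteq> {}" using mu(1) r by simp
  have cdH: "\<And>E S. E \<in> H \<Longrightarrow> S \<subseteq> E \<Longrightarrow> card S = r - 1 \<Longrightarrow> 2 \<le> codeg H S"
    using mu(2) r by simp
  have KH: "\<And>X. X \<subseteq> V \<Longrightarrow> card X = 3 \<Longrightarrow> card (kern r V X) \<le> card H"
    using assms(8) kern_valid[OF fV _ _ r nr1] by blast
  obtain X0 where X0: "X0 \<subseteq> V" "card X0 = 3" using obtain_subset_with_card_n[OF n3] by metis
  have lowH: "((n - 2) choose (r-2)) + 2*((n - 3) choose (r-2)) \<le> card H"
    using le_trans[OF kern_card[OF fV X0 r] KH[OF X0]] unfolding assms(4) .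
  have swap: "\<And>E v. E \<in> H \<Longrightarrow> v \<in> E \<Longrightarrow> \<exists>E'\<in>H. v \<notin> E' \<and> E - {v} \<subseteq> E'"
  proof -
    fix E v assume E: "E \<in> H" "v \<in> E"
    have "card (E - {v}) = r - 1" using E fEs cE by simp
    hence "2 \<le> card {G\<in>H. E - {v} \<subseteq> G}" using cdH[OF E(1)] unfolding codeg_def by blast
    moreover have "E \<in> {G\<in>H. E - {v} \<subseteq> G}" using E by auto
    ultimately obtain E' where E': "E' \<in> H" "E - {v} \<subseteq> E'" "E' \<noteq> E"
      using two_elem_other[of "{G\<in>H. E - {v} \<subseteq> G}" E] fH by auto
    have "v \<notin> E'"
    proof
      assume "v \<in> E'"
      hence "E \<subseteq> E'" using E' by auto
      hence "E = E'" using card_subset_eq[OF fEs[OF E'(1)]] cE E E'(1) by auto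
      thus False using E' by simp
    qed
    thus "\<exists>E'\<in>H. v \<notin> E' \<and> E - {v} \<subseteq> E'" using E' by blast
  qed
  have no1: "\<And>a. \<exists>E\<in>H. a \<notin> E"
  proof -
    fix a
    obtain E where E: "E \<in> H" using Hne by blast
    show "\<exists>E\<in>H. a \<notin> E"
    proof (cases "a \<in> E")
      case True thus ?thesis using swap[OF E True] by blast
    next
      case False thus ?thesis using E by blast
    qed
  qed
  have partner: "\<And>a b E. \<forall>G\<in>H. a \<in> G \<or> b \<in> G \<Longrightarrow> E \<in> H \<Longrightarrow> a \<in> E \<Longrightarrow> b \<notin> E
      \<Longrightarrow> insert b (E - {a}) \<in> H"
  proof -
    fix a b E assume cov: "\<forall>G\<in>H. a \<in> G \<or> b \<in> G" and E: "E \<in> H" "a \<in> E" "b \<notin> E"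
    obtain E' where E': "E' \<in> H" "a \<notin> E'" "E - {a} \<subseteq> E'" using swap[OF E(1,2)] by blast
    have "b \<in> E'" using cov E' by blast
    hence sub: "insert b (E - {a}) \<subseteq> E'" using E' by auto
    have "card (insert b (E - {a})) = r" using E fEs cE r by simp
    hence "insert b (E - {a}) = E'" using card_subset_eq[OF fEs[OF E'(1)] sub] cE E'(1) by simp
    thus "insert b (E - {a}) \<in> H" using E' by simp
  qed
  show ?thesis
  proof (cases "\<exists>a b. a \<noteq> b \<and> (\<forall>E\<in>H. a \<in> E \<or> b \<in> E)")
    case False
    have "\<forall>x. \<exists>E. E \<in> H \<and> x \<notin> E" using no1 by blast
    then obtain g2 where g2: "\<And>x. g2 x \<in> H \<and> x \<notin> g2 x" by metis
    have "\<forall>x y. \<exists>E. E \<in> H \<and> x \<notin> E \<and> y \<notin> E"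
    proof (intro allI)
      fix x y show "\<exists>E. E \<in> H \<and> x \<notin> E \<and> y \<notin> E"
        using False g2[of x] by (cases "x = y") blast+
    qed
    then obtain g3 where g3: "\<And>x y. g3 x y \<in> H \<and> x \<notin> g3 x y \<and> y \<notin> g3 x y" by metis
    obtain E1 where E1: "E1 \<in> H" using Hne by blast
    define B where "B x y z = {G. G \<subseteq> V \<and> card G = r \<and> {x,y,z} \<subseteq> G}" for x y z
    define C where "C = (n - 3) choose (r - 3)"
    have cover: "H \<subseteq> (\<Union>x\<in>E1. \<Union>y\<in>g2 x. \<Union>z\<in>g3 x y. B x y z)"
    proof
      fix G assume G: "G \<in> H"
      obtain x where x: "x \<in> G" "x \<in> E1" using int[OF G E1] by blast
      obtain y where y: "y \<in> G" "y \<in> g2 x" using int[OF G, of "g2 x"] g2 by blast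
      obtain z where z: "z \<in> G" "z \<in> g3 x y" using int[OF G, of "g3 x y"] g3 by blast
      have "G \<in> B x y z" unfolding B_def using G x y z EV cE by auto
      thus "G \<in> (\<Union>x\<in>E1. \<Union>y\<in>g2 x. \<Union>z\<in>g3 x y. B x y z)" using x y z by blast
    qed
    have cB: "card (B x y z) = C" if "x \<in> E1" "y \<in> g2 x" "z \<in> g3 x y" for x y z
    proof -
      have d: "x \<noteq> y" "x \<noteq> z" "y \<noteq> z" using that g2 g3 by metis+
      have inV: "{x,y,z} \<subseteq> V" using that EV E1 g2 g3 by blast
      have "card {x,y,z} = 3" using d by simp
      thus ?thesis unfolding B_def C_def using card_supsets[OF fV inV] r assms(4) by simp
    qed
    have l3: "card (\<Union>z\<in>g3 x y. B x y z) \<le> r * C" if "x \<in> E1" "y \<in> g2 x" for x y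
    proof -
      have "card (\<Union>z\<in>g3 x y. B x y z) \<le> (\<Sum>z\<in>g3 x y. card (B x y z))"
        using fEs g3 by (intro card_UN_le) blast
      also have "\<dots> \<le> card (g3 x y) * C" using sum_bounded_above[of "g3 x y" "\<lambda>z. card (B x y z)" C] cB that by simp
      finally show ?thesis using cE g3 by simp
    qed
    have l2: "card (\<Union>y\<in>g2 x. \<Union>z\<in>g3 x y. B x y z) \<le> r * (r * C)" if "x \<in> E1" for x
    proof -
      have "card (\<Union>y\<in>g2 x. \<Union>z\<in>g3 x y. B x y z) \<le> (\<Sum>y\<in>g2 x. card (\<Union>z\<in>g3 x y. B x y z))"
        using fEs g2 by (intro card_UN_le) blast
      also have "\<dots> \<le> card (g2 x) * (r * C)"
        using sum_bounded_above[of "g2 x" "\<lambda>y. card (\<Union>z\<in>g3 x y. B x y z)" "r * C"] l3 that by simp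
      finally show ?thesis using cE g2 by simp
    qed
    have "card (\<Union>x\<in>E1. \<Union>y\<in>g2 x. \<Union>z\<in>g3 x y. B x y z) \<le> (\<Sum>x\<in>E1. card (\<Union>y\<in>g2 x. \<Union>z\<in>g3 x y. B x y z))"
      using fEs E1 by (intro card_UN_le) blast
    also have "\<dots> \<le> card E1 * (r * (r * C))"
      using sum_bounded_above[of E1 "\<lambda>x. card (\<Union>y\<in>g2 x. \<Union>z\<in>g3 x y. B x y z)" "r * (r * C)"] l2 by simp
    finally have U: "card (\<Union>x\<in>E1. \<Union>y\<in>g2 x. \<Union>z\<in>g3 x y. B x y z) \<le> r ^ 3 * C"
      using cE E1 by (simp add: power3_eq_cube mult.assoc)
    have "finite (\<Union>x\<in>E1. \<Union>y\<in>g2 x. \<Union>z\<in>g3 x y. B x y z)"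
      by (rule finite_subset[of _ "Pow V"]) (use fV in \<open>auto simp: B_def\<close>)
    hence "card H \<le> r ^ 3 * C" using card_mono[OF _ cover] U by linarith
    thus ?thesis using lowH bi(1) unfolding C_def by linarith
  next
    case True
    then obtain a b where ab: "a \<noteq> b" and cov: "\<forall>E\<in>H. a \<in> E \<or> b \<in> E" by blast
    have cov': "\<forall>E\<in>H. b \<in> E \<or> a \<in> E" using cov by blast
    have aV: "a \<in> V"
    proof (rule ccontr)
      assume "a \<notin> V"
      hence "\<forall>E\<in>H. b \<in> E" using cov EV by blast
      thus False using no1[of b] by blast
    qed
    have bV: "b \<in> V"
    proof (rule ccontr)
      assume "b \<notin> V"
      hence "\<forall>E\<in>H. a \<in> E" using cov EV by blast
      thus False using no1[of a] by blast
    qed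
    show ?thesis
    proof (cases "\<exists>c\<in>V. c \<noteq> a \<and> c \<noteq> b \<and> (\<forall>E\<in>H. a \<in> E \<longrightarrow> b \<notin> E \<longrightarrow> c \<in> E)")
      case True
      then obtain c where c: "c \<in> V" "c \<noteq> a" "c \<noteq> b" and cE': "\<forall>E\<in>H. a \<in> E \<longrightarrow> b \<notin> E \<longrightarrow> c \<in> E"
        by blast
      define X where "X = {a,b,c}"
      have XV: "X \<subseteq> V" and cX: "card X = 3" using aV bV c ab unfolding X_def by auto
      have fX: "finite X" unfolding X_def by simp
      have sub: "H \<subseteq> kern r V X"
      proof
        fix E assume E: "E \<in> H"
        have "\<exists>p q. p \<noteq> q \<and> {p,q} \<subseteq> E \<inter> X"
        proof (cases "a \<in> E")
          case aE: True
          show ?thesis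
          proof (cases "b \<in> E")
            case True thus ?thesis using aE ab unfolding X_def by blast
          next
            case False
            hence "c \<in> E" using cE' E aE by blast
            thus ?thesis using aE c unfolding X_def by blast
          qed
        next
          case False
          hence bE: "b \<in> E" using cov E by blast
          have "insert a (E - {b}) \<in> H" using partner[OF cov' E bE False] .
          moreover have "a \<in> insert a (E - {b})" "b \<notin> insert a (E - {b})" using ab by auto
          ultimately have "c \<in> insert a (E - {b})" using cE' by blast
          hence "c \<in> E" using c by blast
          thus ?thesis using bE c unfolding X_def by blast
        qed
        then obtain p q where pq: "p \<noteq> q" "{p,q} \<subseteq> E \<inter> X" by blast
        have "card {p,q} \<le> card (E \<inter> X)" using pq fX by (intro card_mono) auto
        moreover have "card {p,q} = 2" using pq by simp
        ultimately show "E \<in> kern r V X" unfolding kern_def using EV[OF E] cE[OF E] by simp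
      qed
      have fK: "finite (kern r V X)"
        by (rule finite_subset[of _ "Pow V"]) (use fV in \<open>auto simp: kern_def\<close>)
      have "H = kern r V X" using card_subset_eq[OF fK sub] KH[OF XV cX] card_mono[OF fK sub] by linarith
      thus ?thesis unfolding kernel_system_def kern_def using XV cX by auto
    next
      case False
      have "\<forall>c. \<exists>E. c \<in> V \<and> c \<noteq> a \<and> c \<noteq> b \<longrightarrow> E \<in> H \<and> a \<in> E \<and> b \<notin> E \<and> c \<notin> E"
        using False by blast
      then obtain g where g: "\<And>c. c \<in> V \<Longrightarrow> c \<noteq> a \<Longrightarrow> c \<noteq> b \<Longrightarrow> g c \<in> H \<and> a \<in> g c \<and> b \<notin> g c \<and> c \<notin> g c"
        by metis
      have "card (V - {a,b}) = n - 2" using aV bV ab fV assms(4) by (simp add: card_Diff_subset)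
      hence "0 < card (V - {a,b})" using n3 assms(4) by linarith
      hence "V - {a,b} \<noteq> {}" by (metis card.empty less_irrefl)
      then obtain c0 where c0: "c0 \<in> V" "c0 \<noteq> a" "c0 \<noteq> b" by blast
      define E1 where "E1 = g c0"
      have E1: "E1 \<in> H" "a \<in> E1" "b \<notin> E1" using g[OF c0] unfolding E1_def by auto
      define Hab where "Hab = {E\<in>H. a \<in> E \<and> b \<in> E}"
      define Ha where "Ha = {E\<in>H. a \<in> E \<and> b \<notin> E}"
      define Hb where "Hb = {E\<in>H. b \<in> E \<and> a \<notin> E}"
      define B where "B x y = {G. G \<subseteq> V \<and> card G = r \<and> {a,x,y} \<subseteq> G}" for x y
      define C where "C = (n - 3) choose (r - 3)"
      have HU: "H = Hab \<union> Ha \<union> Hb" using cov unfolding Hab_def Ha_def Hb_def by blast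
      have finH: "finite Hab" "finite Ha" "finite Hb" using fH unfolding Hab_def Ha_def Hb_def by auto
      have cHab: "card Hab \<le> (n - 2) choose (r - 2)"
      proof -
        have "Hab \<subseteq> {E. E \<subseteq> V \<and> card E = r \<and> {a,b} \<subseteq> E}" unfolding Hab_def using EV cE by auto
        moreover have "finite {E. E \<subseteq> V \<and> card E = r \<and> {a,b} \<subseteq> E}"
          by (rule finite_subset[of _ "Pow V"]) (use fV in auto)
        ultimately have "card Hab \<le> card {E. E \<subseteq> V \<and> card E = r \<and> {a,b} \<subseteq> E}" by (rule card_mono[rotated])
        also have "\<dots> = (n - 2) choose (r - 2)"
          using card_supsets[of V "{a,b}" r] aV bV ab fV r assms(4) by (simp add: numeral_2_eq_2)
        finally show ?thesis .
      qed
      have cHb: "card Hb \<le> card Ha"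
      proof -
        have "Hb \<subseteq> (\<lambda>E. insert b (E - {a})) ` Ha"
        proof
          fix E assume E: "E \<in> Hb"
          hence EH: "E \<in> H" "b \<in> E" "a \<notin> E" unfolding Hb_def by auto
          have "insert a (E - {b}) \<in> H" using partner[OF cov' EH] .
          hence "insert a (E - {b}) \<in> Ha" unfolding Ha_def using ab by auto
          moreover have "E = insert b (insert a (E - {b}) - {a})" using EH ab by auto
          ultimately show "E \<in> (\<lambda>E. insert b (E - {a})) ` Ha" by blast
        qed
        hence "card Hb \<le> card ((\<lambda>E. insert b (E - {a})) ` Ha)"
          by (intro card_mono) (use finH in auto)
        also have "\<dots> \<le> card Ha" using card_image_le finH by blast
        finally show ?thesis .
      qed
      have coverA: "Ha \<subseteq> (\<Union>x\<in>E1 - {a}. \<Union>y\<in>g x - {a}. B x y)"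
      proof
        fix G assume G: "G \<in> Ha"
        hence GH: "G \<in> H" "a \<in> G" "b \<notin> G" unfolding Ha_def by auto
        have P1: "insert b (E1 - {a}) \<in> H" using partner[OF cov E1] .
        obtain x where x: "x \<in> G" "x \<in> insert b (E1 - {a})" using int[OF GH(1) P1] by blast
        have xE: "x \<in> E1 - {a}" using x GH by auto
        have xc: "x \<in> V" "x \<noteq> a" "x \<noteq> b" using xE E1 EV by auto
        note gx = g[OF xc]
        have P2: "insert b (g x - {a}) \<in> H" using partner[OF cov] gx by blast
        obtain y where y: "y \<in> G" "y \<in> insert b (g x - {a})" using int[OF GH(1) P2] by blast
        have yE: "y \<in> g x - {a}" using y GH by auto
        have "G \<in> B x y" unfolding B_def using GH x y EV cE by auto
        thus "G \<in> (\<Union>x\<in>E1 - {a}. \<Union>y\<in>g x - {a}. B x y)" using xE yE by blast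
      qed
      have cB: "card (B x y) = C" if "x \<in> E1 - {a}" "y \<in> g x - {a}" for x y
      proof -
        have xc: "x \<in> V" "x \<noteq> a" "x \<noteq> b" using that E1 EV by auto
        note gx = g[OF xc]
        have d: "a \<noteq> x" "a \<noteq> y" "x \<noteq> y" using that gx by auto
        have inV: "{a,x,y} \<subseteq> V" using that EV gx E1 aV by blast
        have "card {a,x,y} = 3" using d by simp
        thus ?thesis unfolding B_def C_def using card_supsets[OF fV inV] r assms(4) by simp
      qed
      have l2: "card (\<Union>y\<in>g x - {a}. B x y) \<le> (r - 1) * C" if "x \<in> E1 - {a}" for x
      proof -
        have xc: "x \<in> V" "x \<noteq> a" "x \<noteq> b" using that E1 EV by auto
        note gx = g[OF xc]
        have "card (\<Union>y\<in>g x - {a}. B x y) \<le> (\<Sum>y\<in>g x - {a}. card (B x y))"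
          using fEs gx by (intro card_UN_le) blast
        also have "\<dots> \<le> card (g x - {a}) * C"
          using sum_bounded_above[of "g x - {a}" "\<lambda>y. card (B x y)" C] cB that by simp
        also have "card (g x - {a}) = r - 1" using gx fEs cE by simp
        finally show ?thesis .
      qed
      have "card (\<Union>x\<in>E1 - {a}. \<Union>y\<in>g x - {a}. B x y) \<le> (\<Sum>x\<in>E1 - {a}. card (\<Union>y\<in>g x - {a}. B x y))"
        using fEs E1 by (intro card_UN_le) blast
      also have "\<dots> \<le> card (E1 - {a}) * ((r - 1) * C)"
        using sum_bounded_above[of "E1 - {a}" "\<lambda>x. card (\<Union>y\<in>g x - {a}. B x y)" "(r - 1) * C"] l2 by simp
      also have "card (E1 - {a}) = r - 1" using E1 fEs cE by simp
      finally have U: "card (\<Union>x\<in>E1 - {a}. \<Union>y\<in>g x - {a}. B x y) \<le> (r - 1)^2 * C"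
        by (simp add: power2_eq_square mult.assoc)
      have "finite (\<Union>x\<in>E1 - {a}. \<Union>y\<in>g x - {a}. B x y)"
        by (rule finite_subset[of _ "Pow V"]) (use fV in \<open>auto simp: B_def\<close>)
      hence cHa: "card Ha \<le> (r - 1)^2 * C" using card_mono[OF _ coverA] U by linarith
      have "card H \<le> card Hab + card Ha + card Hb"
        unfolding HU by (meson card_Un_le add_le_mono1 order_trans)
      hence "card H \<le> ((n - 2) choose (r - 2)) + 2 * ((r - 1)^2 * C)" using cHab cHa cHb by linarith
      thus ?thesis using lowH bi(2) unfolding C_def by linarith
    qed
  qed
qed

end
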